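(* Let $\alpha>0$, $\beta>0$, $\gamma>0$ and suppose that ${}_1F_2\left(\alpha\,;\beta,\gamma\,;-\frac{x^2}{4}\right)\ge0$ for all $x\in\mathbb{R}$. If $p\ge2$ and $0<a_j<b_j$ for $j=1,\dots,p-1$, then $$\Phi(x)={}_pF_{p+1}\left(\begin{array}{c}\alpha,\,a_1,\dots,a_{p-1}\\ \beta,\,\gamma,\,b_1,\dots,b_{p-1}\end{array}\biggl|\,-\frac{x^2}{4}\right)>0\quad\text{for all } x>0.$$
   Context: Generalized hypergeometric functions are defined by ${}_pF_{q}\left(\begin{array}{c}\alpha_1,\dots,\alpha_p\\ \beta_1,\dots,\beta_q\end{array}\big|\, z\right)=\sum_{k=0}^\infty\frac{(\alpha_1)_k\cdots(\alpha_p)_k}{k!\,(\beta_1)_k\cdots(\beta_q)_k}z^k$, where $(\alpha)_k=\Gamma(\alpha+k)/\Gamma(\alpha)$; in particular ${}_1F_2\left(a\,;b,c\,;z\right)$ has upper parameter $a$ and lower parameters $b,c$. *)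

theory Defs
  imports "HOL-Analysis.Analysis"
begin

definition hypergeom :: "real list \<Rightarrow> real list \<Rightarrow> real \<Rightarrow> real" where
  "hypergeom as bs z =
     (\<Sum>k. (\<Prod>a\<leftarrow>as. pochhammer a k) / (fact k * (\<Prod>b\<leftarrow>bs. pochhammer b k)) * z ^ k)"

end

theory Submission
  imports Defs
begin

lemma pos_notin_nonpos_Ints: "(x::real) > 0 \<Longrightarrow> x \<notin> \<int>\<^sub>\<le>\<^sub>0"
  by (auto elim!: nonpos_Ints_cases)

lemma poch_le: "0 < (a::real) \<Longrightarrow> a \<le> b \<Longrightarrow> pochhammer a k \<le> pochhammer b k"
proof (induction k)
  case (Suc k)
  then show ?case unfolding pochhammer_Suc
    by (intro mult_mono) (auto intro: pochhammer_nonneg)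
qed simp

lemma poch_ratio_Beta:
  assumes "0 < (a::real)" "a < b"
  shows "pochhammer a k / pochhammer b k = Beta (a + real k) (b - a) / Beta a (b - a)"
proof -
  have ga: "Gamma a > 0" "Gamma b > 0" "Gamma (b-a) > 0" "Gamma (a + real k) > 0" "Gamma (b + real k) > 0"
    using assms by auto
  show ?thesis
    using assms ga
    apply (simp add: pochhammer_Gamma pos_notin_nonpos_Ints Beta_def)
    apply (simp add: field_simps)
    using ga by force
qed

lemma powr_shift: "(t::real) \<ge> 0 \<Longrightarrow> t powr (a + real k - 1) = t powr (a - 1) * t ^ k"
proof (cases "t = 0")
  case False
  assume "t \<ge> 0"
  hence "t > 0" using False by simp
  have "a + real k - 1 = (a - 1) + real k" by simp
  then show ?thesis using \<open>t > 0\<close> by (simp only: powr_add powr_realpow)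
qed simp


lemma summ_step:
  fixes c :: "nat \<Rightarrow> real"
  assumes "0 < a" "a < b" and S: "\<And>z. summable (\<lambda>k. norm (c k * z^k))"
  shows "summable (\<lambda>k. norm (pochhammer a k / pochhammer b k * c k * z^k))"
proof (rule summable_comparison_test'[OF S[of z]])
  fix k :: nat
  have p: "0 < pochhammer a k" "pochhammer a k \<le> pochhammer b k" "0 < pochhammer b k"
    using assms by (auto intro: pochhammer_pos poch_le)
  hence r: "0 \<le> pochhammer a k / pochhammer b k" "pochhammer a k / pochhammer b k \<le> 1"
    by (auto simp: divide_le_eq_1)
  have "norm (norm (pochhammer a k / pochhammer b k * c k * z^k))
        = (pochhammer a k / pochhammer b k) * norm (c k * z^k)"
    using p by (simp add: abs_mult)
  also have "\<dots> \<le> 1 * norm (c k * z^k)"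
    using r by (intro mult_right_mono) auto
  finally show "norm (norm (pochhammer a k / pochhammer b k * c k * z^k)) \<le> norm (c k * z^k)"
    by simp
qed

lemma euler:
  fixes c :: "nat \<Rightarrow> real"
  assumes ab: "0 < a" "a < b" and S: "\<And>z. summable (\<lambda>k. norm (c k * z^k))"
  shows "((\<lambda>t. t powr (a-1) * (1-t) powr (b-a-1) * (\<Sum>k. c k * (z*t)^k)) has_integral
          Beta a (b-a) * (\<Sum>k. pochhammer a k / pochhammer b k * c k * z^k)) {0..1}"
proof -
  define w where "w t = t powr (a-1) * (1-t) powr (b-a-1)" for t :: real
  define d where "d k = pochhammer a k / pochhammer b k * c k * z^k" for k
  define M where "M = (\<Sum>k. norm (c k * z^k))"
  have Bpos: "Beta a (b-a) > 0" using ab by (simp add: Beta_def)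
  have wnn: "w t \<ge> 0" if "t \<in> {0..1}" for t using that by (simp add: w_def)
  have hk: "((\<lambda>t. c k * z^k * (t powr (a + real k - 1) * (1-t) powr ((b-a) - 1))) has_integral
              (c k * z^k * Beta (a + real k) (b-a))) {0..1}" for k
    using has_integral_Beta_real[of "a + real k" "b-a"] ab by (intro has_integral_mult_right) auto
  have hn: "((\<lambda>t. w t * (\<Sum>k<n. c k * (z*t)^k)) has_integral
              (\<Sum>k<n. c k * z^k * Beta (a + real k) (b-a))) {0..1}" for n
  proof (rule has_integral_eq[OF _ has_integral_sum[OF finite_lessThan hk]])
    fix t :: real assume "t \<in> {0..1}"
    then show "(\<Sum>k<n. c k * z^k * (t powr (a + real k - 1) * (1-t) powr ((b-a) - 1)))
               = w t * (\<Sum>k<n. c k * (z*t)^k)"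
      by (simp add: w_def sum_distrib_left powr_shift power_mult_distrib mult_ac)
  qed
  have hint: "(\<lambda>t. w t * M) integrable_on {0..1}"
    using has_integral_mult_left[OF has_integral_Beta_real[of a "b-a"], of M] ab
    unfolding w_def by (auto simp: integrable_on_def)
  have bound: "\<forall>t\<in>{0..1}. norm (w t * (\<Sum>k<n. c k * (z*t)^k)) \<le> w t * M" for n
  proof
    fix t :: real assume t: "t \<in> {0..1}"
    have "norm (\<Sum>k<n. c k * (z*t)^k) \<le> (\<Sum>k<n. norm (c k * (z*t)^k))"
      by (rule norm_sum)
    also have "\<dots> \<le> (\<Sum>k<n. norm (c k * z^k))"
    proof (rule sum_mono)
      fix k assume "k \<in> {..<n}"
      have "t^k \<le> 1" using t by (auto intro: power_le_one)
      hence "norm (c k * z^k) * t^k \<le> norm (c k * z^k) * 1"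
        by (intro mult_left_mono) auto
      moreover have "norm (c k * (z*t)^k) = norm (c k * z^k) * t^k"
        using t by (simp add: power_mult_distrib abs_mult)
      ultimately show "norm (c k * (z*t)^k) \<le> norm (c k * z^k)" by simp
    qed
    also have "\<dots> \<le> M" unfolding M_def
      by (rule sum_le_suminf[OF S]) auto
    finally have "norm (\<Sum>k<n. c k * (z*t)^k) \<le> M" .
    then show "norm (w t * (\<Sum>k<n. c k * (z*t)^k)) \<le> w t * M"
      using wnn[OF t] by (simp add: abs_mult mult_left_mono)
  qed
  have conv: "\<forall>t\<in>{0..1}. (\<lambda>n. w t * (\<Sum>k<n. c k * (z*t)^k)) \<longlonglongrightarrow> w t * (\<Sum>k. c k * (z*t)^k)"
    using summable_LIMSEQ[OF summable_norm_cancel[OF S]] by (auto intro: tendsto_mult_left)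
  have yeq: "(\<Sum>k<n. c k * z^k * Beta (a + real k) (b-a)) = Beta a (b-a) * (\<Sum>k<n. d k)" for n
    unfolding sum_distrib_left
  proof (rule sum.cong[OF refl])
    fix k
    show "c k * z^k * Beta (a + real k) (b-a) = Beta a (b-a) * d k"
      unfolding d_def poch_ratio_Beta[OF ab] using Bpos by (simp add: field_simps)
  qed
  have ylim: "(\<lambda>n. \<Sum>k<n. c k * z^k * Beta (a + real k) (b-a)) \<longlonglongrightarrow> Beta a (b-a) * suminf d"
  proof -
    have "summable d" unfolding d_def by (rule summable_norm_cancel[OF summ_step[OF ab S]])
    then show ?thesis unfolding yeq by (intro tendsto_mult_left summable_LIMSEQ)
  qed
  have "((\<lambda>t. w t * (\<Sum>k. c k * (z*t)^k)) has_integral Beta a (b-a) * suminf d) {0..1}"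
    by (rule has_integral_dominated_convergence[OF hn hint bound conv ylim])
  then show ?thesis unfolding w_def d_def[abs_def] .
qed


lemma powr_integral:
  assumes "0 < a" "0 \<le> d"
  shows "((\<lambda>t::real. t powr (a - 1)) has_integral (d powr a / a)) {0..d}"
proof -
  have "((\<lambda>t::real. t powr (a - 1)) has_integral (d powr a / a - 0 powr a / a)) {0..d}"
  proof (rule fundamental_theorem_of_calculus_interior)
    show "0 \<le> d" by fact
    show "continuous_on {0..d} (\<lambda>t::real. t powr a / a)"
      using assms by (intro continuous_intros continuous_on_powr') auto
    fix x :: real assume "x \<in> {0<..<d}"
    then have "x > 0" by simp
    have "((\<lambda>t. t powr a / a) has_real_derivative (a * x powr (a - 1)) / a) (at x)"
      by (intro DERIV_cdivide has_real_derivative_powr \<open>x > 0\<close>)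
    then show "((\<lambda>t. t powr a / a) has_vector_derivative x powr (a - 1)) (at x)"
      using assms by (simp add: has_real_derivative_iff_has_vector_derivative)
  qed
  then show ?thesis by simp
qed

lemma step_pos:
  fixes c :: "nat \<Rightarrow> real"
  assumes ab: "0 < a" "a < b" and S: "\<And>z. summable (\<lambda>k. norm (c k * z^k))"
    and c0: "c 0 = 1" and nn: "\<And>u. u \<le> 0 \<Longrightarrow> (\<Sum>k. c k * u^k) \<ge> 0" and z: "z \<le> 0"
  shows "(\<Sum>k. pochhammer a k / pochhammer b k * c k * z^k) > 0"
proof -
  define F where "F u = (\<Sum>k. c k * u^k)" for u :: real
  have "isCont F 0" unfolding F_def
    by (rule isCont_powser_converges_everywhere) (rule summable_norm_cancel[OF S])
  moreover have F0: "F 0 = 1" unfolding F_def using c0 by simp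
  ultimately have "F \<midarrow>0\<rightarrow> 1" by (metis isCont_def)
  from LIM_D[OF this, of "1/2"] obtain \<epsilon> where eps: "\<epsilon> > 0"
    "\<And>u. u \<noteq> 0 \<and> norm (u - 0) < \<epsilon> \<longrightarrow> norm (F u - 1) < 1/2" by auto
  have Fbig: "F u \<ge> 1/2" if "\<bar>u\<bar> < \<epsilon>" for u
  proof (cases "u = 0")
    case True then show ?thesis using F0 by simp
  next
    case False
    then have "\<bar>F u - 1\<bar> < 1/2" using eps(2)[of u] that by auto
    then show ?thesis by linarith
  qed
  define \<delta> where "\<delta> = min (1/2) (\<epsilon> / (\<bar>z\<bar> + 1))"
  have dpos: "\<delta> > 0" using eps by (simp add: \<delta>_def)
  have dle: "\<delta> \<le> 1/2" unfolding \<delta>_def by (rule min.cobounded1)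
  have zd: "\<bar>z\<bar> * \<delta> < \<epsilon>"
  proof -
    have "\<bar>z\<bar> * \<delta> \<le> \<bar>z\<bar> * (\<epsilon> / (\<bar>z\<bar> + 1))"
      by (intro mult_left_mono) (auto simp: \<delta>_def)
    also have "\<dots> < \<epsilon>" using eps by (simp add: field_simps)
    finally show ?thesis .
  qed
  define e where "e = b - a - 1"
  define m where "m = min 1 ((1/2) powr e)"
  have mpos: "m > 0" by (simp add: m_def)
  have wlow: "(1 - t) powr e \<ge> m" if "0 \<le> t" "t \<le> 1/2" for t :: real
  proof (cases "e \<ge> 0")
    case True
    have "(1/2) powr e \<le> (1 - t) powr e" using True that by (intro powr_mono2) auto
    then show ?thesis unfolding m_def by linarith
  next
    case False
    have "1 powr e \<le> (1 - t) powr e" using False that by (intro powr_mono2') auto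
    then show ?thesis unfolding m_def by simp
  qed
  define L where "L t = (if t \<in> cbox 0 \<delta> then m / 2 * t powr (a - 1) else 0)" for t :: real
  have Lint: "(L has_integral (m / 2 * (\<delta> powr a / a))) {0..1}"
  proof -
    have "((\<lambda>t. m / 2 * t powr (a - 1)) has_integral (m / 2 * (\<delta> powr a / a))) (cbox 0 \<delta>)"
      using powr_integral[OF ab(1), of \<delta>] dpos by (intro has_integral_mult_right) auto
    then have "(L has_integral (m / 2 * (\<delta> powr a / a))) (cbox 0 1)"
      unfolding L_def
      by (subst has_integral_restrict_closed_subintervals_eq) (use dle in auto)
    then show ?thesis by simp
  qed
  have E: "((\<lambda>t. t powr (a-1) * (1-t) powr (b-a-1) * F (z * t)) has_integral
          Beta a (b-a) * (\<Sum>k. pochhammer a k / pochhammer b k * c k * z^k)) {0..1}"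
    unfolding F_def by (rule euler[OF ab S])
  have "m / 2 * (\<delta> powr a / a) \<le> Beta a (b-a) * (\<Sum>k. pochhammer a k / pochhammer b k * c k * z^k)"
  proof (rule has_integral_le[OF Lint E])
    fix t :: real assume t: "t \<in> {0..1}"
    have wnn: "0 \<le> t powr (a-1) * (1-t) powr (b-a-1)" using t by simp
    show "L t \<le> t powr (a-1) * (1-t) powr (b-a-1) * F (z * t)"
    proof (cases "t \<in> cbox 0 \<delta>")
      case True
      then have t2: "0 \<le> t" "t \<le> \<delta>" by auto
      have "\<bar>z * t\<bar> \<le> \<bar>z\<bar> * \<delta>" using t2 by (simp add: abs_mult mult_left_mono)
      then have "F (z * t) \<ge> 1/2" using zd by (intro Fbig) simp
      moreover have "(1 - t) powr (b-a-1) \<ge> m" using wlow[of t] t2 dle unfolding e_def by simp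
      ultimately have "m / 2 * t powr (a - 1) \<le> t powr (a-1) * ((1-t) powr (b-a-1) * F (z * t))"
      proof -
        have "m * (1/2) \<le> (1-t) powr (b-a-1) * F (z * t)"
          using mpos \<open>F (z * t) \<ge> 1/2\<close> \<open>(1 - t) powr (b-a-1) \<ge> m\<close>
          by (intro mult_mono) auto
        then have "t powr (a - 1) * (m * (1/2)) \<le> t powr (a-1) * ((1-t) powr (b-a-1) * F (z * t))"
          by (intro mult_left_mono) auto
        then show ?thesis by (simp add: mult_ac)
      qed
      then show ?thesis using True by (simp add: L_def mult_ac)
    next
      case False
      have "F (z * t) \<ge> 0" using t z by (intro nn[unfolded F_def[symmetric]]) (simp add: mult_nonpos_nonneg)
      moreover have "L t = 0" using False unfolding L_def by (simp only: if_False)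
      ultimately show ?thesis using wnn by simp
    qed
  qed
  moreover have "0 < m / 2 * (\<delta> powr a / a)" using mpos dpos ab by simp
  moreover have "Beta a (b-a) > 0" using ab by (simp add: Beta_def)
  ultimately show ?thesis by (metis order_less_le_trans zero_less_mult_pos)
qed


definition coef :: "real list \<Rightarrow> real list \<Rightarrow> nat \<Rightarrow> real" where
  "coef as bs k = (\<Prod>a\<leftarrow>as. pochhammer a k) / (fact k * (\<Prod>b\<leftarrow>bs. pochhammer b k))"

lemma hypergeom_coef: "hypergeom as bs z = (\<Sum>k. coef as bs k * z^k)"
  by (simp add: hypergeom_def coef_def)

lemma prod_list_ones: "(\<Prod>a\<leftarrow>as. (1::real)) = 1"
  by (induct as) auto

lemma coef_0: "coef as bs 0 = 1"
  by (simp add: coef_def prod_list_ones)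

lemma coef_cons:
  "coef (al # map a (j # L)) (be # ga # map b (j # L)) k =
   pochhammer (a j) k / pochhammer (b j) k * coef (al # map a L) (be # ga # map b L) k"
  by (simp add: coef_def times_divide_times_eq mult_ac)

lemma base_summable:
  assumes "\<alpha> > 0" "\<beta> > 0" "\<gamma> > 0"
  shows "summable (\<lambda>k. norm (coef [\<alpha>] [\<beta>, \<gamma>] k * z^k))"
proof -
  define f where "f k = norm (coef [\<alpha>] [\<beta>, \<gamma>] k * z^k)" for k
  define N :: nat where "N = nat \<lceil>\<alpha> + 4 * \<bar>z\<bar> + 1\<rceil>"
  have "summable f"
  proof (rule summable_ratio_test[of "1/2" N])
    fix n assume n: "n \<ge> N"
    have nge: "real n \<ge> \<alpha> + 4 * \<bar>z\<bar> + 1" using n unfolding N_def by linarith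
    have pp: "pochhammer \<alpha> n > 0" "pochhammer \<beta> n > 0" "pochhammer \<gamma> n > 0"
      using assms by (auto intro: pochhammer_pos)
    define r where "r = (\<alpha> + n) * \<bar>z\<bar> / ((n + 1) * (\<beta> + n) * (\<gamma> + n))"
    have ceq: "coef [\<alpha>] [\<beta>, \<gamma>] (Suc n) = coef [\<alpha>] [\<beta>, \<gamma>] n * ((\<alpha> + n) / ((n + 1) * (\<beta> + n) * (\<gamma> + n)))"
      unfolding coef_def using pp assms
      by (simp add: pochhammer_Suc field_simps)
    have "f (Suc n) = norm (coef [\<alpha>] [\<beta>, \<gamma>] n * z^n * ((\<alpha> + n) / ((n + 1) * (\<beta> + n) * (\<gamma> + n)) * z))"
      unfolding f_def ceq by (simp add: mult_ac)
    also have "\<dots> = f n * ((\<alpha> + n) / ((n + 1) * (\<beta> + n) * (\<gamma> + n)) * \<bar>z\<bar>)"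
      unfolding f_def using assms by (simp add: abs_mult)
    finally have eq: "f (Suc n) = r * f n" unfolding r_def by simp
    have den: "(n + 1) * (\<beta> + n) * (\<gamma> + n) > 0" using assms by simp
    have "(\<alpha> + n) * \<bar>z\<bar> * 2 \<le> (2 * real n) * \<bar>z\<bar> * 2"
      using nge by (intro mult_right_mono) auto
    also have "\<dots> = real n * (4 * \<bar>z\<bar>)" by simp
    also have "\<dots> \<le> real n * (real n * real n)"
    proof (intro mult_left_mono)
      have "real n \<ge> 1" using nge assms by linarith
      then have "real n \<le> real n * real n" using mult_right_mono[of 1 "real n" "real n"] by simp
      then show "4 * \<bar>z\<bar> \<le> real n * real n" using nge assms by linarith
    qed simp
    also have "\<dots> = (real n * real n) * real n" by simp
    also have "\<dots> \<le> ((real n + 1) * (\<beta> + real n)) * (\<gamma> + real n)"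
      using assms by (intro mult_mono) auto
    finally have "r \<le> 1/2" unfolding r_def using den by (simp add: field_simps)
    moreover have "f n \<ge> 0" by (simp add: f_def)
    ultimately have "r * f n \<le> 1/2 * f n" by (rule mult_right_mono)
    moreover have "f (Suc n) \<ge> 0" by (simp add: f_def)
    ultimately show "norm (f (Suc n)) \<le> 1/2 * norm (f n)"
      using eq \<open>f n \<ge> 0\<close> by simp
  qed simp
  then show ?thesis unfolding f_def[abs_def] .
qed


lemma invariant:
  fixes \<alpha> \<beta> \<gamma> :: real and a b :: "nat \<Rightarrow> real"
  assumes "\<alpha> > 0" "\<beta> > 0" "\<gamma> > 0"
    and base: "\<And>u. u \<le> 0 \<Longrightarrow> hypergeom [\<alpha>] [\<beta>, \<gamma>] u \<ge> 0"
  shows "(\<forall>j\<in>set L. 0 < a j \<and> a j < b j) \<Longrightarrow>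
    (\<forall>z. summable (\<lambda>k. norm (coef (\<alpha> # map a L) (\<beta> # \<gamma> # map b L) k * z^k))) \<and>
    (\<forall>u\<le>0. hypergeom (\<alpha> # map a L) (\<beta> # \<gamma> # map b L) u \<ge> 0)"
proof (induction L)
  case Nil
  then show ?case using base_summable[OF assms(1-3)] base by simp
next
  case (Cons j L)
  then have ab: "0 < a j" "a j < b j" and IH:
    "\<And>z. summable (\<lambda>k. norm (coef (\<alpha> # map a L) (\<beta> # \<gamma> # map b L) k * z^k))"
    "\<And>u. u \<le> 0 \<Longrightarrow> hypergeom (\<alpha> # map a L) (\<beta> # \<gamma> # map b L) u \<ge> 0"
    by auto
  show ?case
    unfolding coef_cons hypergeom_coef
    using summ_step[OF ab IH(1)] step_pos[OF ab IH(1) coef_0, of _] IH(2)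
    by (auto simp: hypergeom_coef intro: less_imp_le)
qed

theorem theorem7:
  fixes \<alpha> \<beta> \<gamma> :: real and p :: nat and a b :: "nat \<Rightarrow> real"
  assumes "\<alpha> > 0" and "\<beta> > 0" and "\<gamma> > 0"
    and "\<forall>x::real. hypergeom [\<alpha>] [\<beta>, \<gamma>] (- (x^2) / 4) \<ge> 0"
    and "p \<ge> 2"
    and "\<forall>j\<in>{1..p-1}. 0 < a j \<and> a j < b j"
  shows "\<forall>x::real. x > 0 \<longrightarrow>
    hypergeom (\<alpha> # map a [1..<p]) (\<beta> # \<gamma> # map b [1..<p]) (- (x^2) / 4) > 0"
proof (intro allI impI)
  fix x :: real assume "x > 0"
  have base: "hypergeom [\<alpha>] [\<beta>, \<gamma>] u \<ge> 0" if "u \<le> 0" for u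
  proof -
    have "(2 * sqrt (- u))^2 = 4 * (- u)" using that by (simp add: power_mult_distrib)
    then have "- ((2 * sqrt (- u))^2) / 4 = u" by simp
    then show ?thesis using assms(4)[rule_format, of "2 * sqrt (- u)"] by simp
  qed
  have ups: "[1..<p] = 1 # [2..<p]" using assms(5) upt_conv_Cons[of 1 p] by (simp add: numeral_2_eq_2)
  have ab: "0 < a 1" "a 1 < b 1" using assms(5,6) by auto
  have L: "\<forall>j\<in>set [2..<p]. 0 < a j \<and> a j < b j" using assms(6) by auto
  note I = invariant[OF assms(1-3) base L]
  have S: "\<And>z. summable (\<lambda>k. norm (coef (\<alpha> # map a [2..<p]) (\<beta> # \<gamma> # map b [2..<p]) k * z^k))"
    using I by blast
  have nn: "\<And>u. u \<le> 0 \<Longrightarrow> 0 \<le> (\<Sum>k. coef (\<alpha> # map a [2..<p]) (\<beta> # \<gamma> # map b [2..<p]) k * u^k)"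
    using I by (simp add: hypergeom_coef)
  have "- (x^2) / 4 \<le> (0::real)" by simp
  note P = step_pos[OF ab S coef_0 nn this]
  show "hypergeom (\<alpha> # map a [1..<p]) (\<beta> # \<gamma> # map b [1..<p]) (- (x^2) / 4) > 0"
    unfolding ups hypergeom_coef coef_cons using P by (simp add: mult_ac)
qed

end
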